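(* Let $U_3=(\mathbb{N},F_3)$ where $F_3=\{l_i:i\in\mathbb{N}\setminus\{0\}\}$ and, for $i\ge 1$, $j\in\mathbb{N}$, $l_i(j)=0$ if $j\le i$ and $l_i(j)=1$ if $j>i$. Then $\operatorname{typ}_u(Tab(U_3),h)=t_3$, where $h$ is the depth and $t_3$ is the table with rows (indexed $i,d,a$; entries in columns $i,d,a$) $(\gamma,\epsilon,\epsilon)$, $(\beta,\gamma,\epsilon)$, $(\alpha,\alpha,\alpha)$.
   Context: Let $\mathbb{N}=\{0,1,2,\dots\}$; for $k\ge 2$, $E_k=\{0,\dots,k-1\}$; $\mathcal{P}(\mathbb{N})$ is the set of nonempty finite subsets of $\mathbb{N}$. For a nonempty set $F$, a decision table $T\in\mathcal{M}_k(F)$ is a rectangular table with $n\ge1$ columns labeled with attributes $f_1,\dots,f_n\in F$ (columns with the same label are equal), whose rows are pairwise different tuples in $E_k^n$ (possibly none), each row labeled with a set from $\mathcal{P}(\mathbb{N})$; $At(T)=\{f_1,\dots,f_n\}$, $\Delta(T)$ the set of rows; for a word $\alpha=(f_{i_1},\delta_1)\cdots(f_{i_m},\delta_m)$, $T\alpha$ is the subtable of rows with value $\delta_j$ in column $f_{i_j}$ for all $j$. Information system: $U=(A,F)$ with $A$ nonempty and $F$ a nonempty set of functions $A\to E_k$ (here $k=2$). A problem over $U$ is $z=(\nu,f_1,\dots,f_n)$ with $n\ge1$, $\nu:E_k^n\to\mathcal{P}(\mathbb{N})$, $f_1,\dots,f_n\in F$. Its table $T(z)\in\mathcal{M}_k(F)$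 has columns labeled $f_1,\dots,f_n$; $\bar\delta\in E_k^n$ is a row iff there is $x\in A$ with $f_j(x)=\delta_j$ for all $j$, and it is labeled $\nu(\bar\delta)$. $Tab(U)=\{T(z): z \text{ a problem over } U\}$ (a closed class, i.e. closed under removal of columns (keeping the first of equal rows), arbitrary changing of decision sets, permutation and duplication of columns). Decision trees over $\mathcal{M}_k(F)$: finite rooted directed trees with at least two nodes; root and edges leaving the root unlabeled; worker nodes (neither root nor terminal) labeled by attributes in $F$; edges leaving worker nodes labeled by elements of $E_k$; terminal nodes labeled by numbers in $\mathbb{N}$. For a complete path $\xi$, $\pi(\xi)$ is the word of pairs (attribute of worker node, label of leaving edge) along $\xi$, $\varphi(\xi)$ the word of those attributes, $\tau(\xi)$ the terminal label. A nondeterministic decision tree for $T$ uses only attributes in $At(T)$, satisfies $\bigcup_\xi\Delta(T\pi(\xi))=\Delta(T)$, and for every row $r\in\Delta(T\pi(\xi))$, $\tau(\xi)$ lies in the decision set of $r$. It is deterministic if exactly one edge leaves the root and edges leaving each worker node have distinct labels. The depth of a word is its length $h(\alpha)=|\alpha|$; $h(\Gamma)=\max_\xi h(\varphi(\xi))$. For $T$ with columns $f_1,\dots,f_n$: $h^i(T)=n$, $h^d(T)$ and $h^a(T)$ are the minimum depths of deterministic, respectively nondeterministic, decision trees for $T$. For $b,c\in\{i,d,a\}$ and a class $\mathcal{C}$, $\mathcal{U}^{bc}_{\mathcal{C}h}(n)=\max\{h^b(T):T\in\mathcal{C},h^c(T)\le n\}$ (defined iff this set is nonempty and finite). For a partial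 $g:\mathbb{N}\to\mathbb{N}$, $\mathrm{Dom}^+(g)=\{n\in\mathrm{Dom}(g):g(n)\ge n\}$, $\mathrm{Dom}^-(g)=\{n\in\mathrm{Dom}(g):g(n)\le n\}$; $\operatorname{typ}(g)$ is $\alpha$ if $\mathrm{Dom}(g)$ is infinite and $g$ bounded above; $\beta$ if $\mathrm{Dom}(g)$ infinite, $\mathrm{Dom}^+(g)$ finite, $g$ unbounded; $\gamma$ if $\mathrm{Dom}^+(g)$ and $\mathrm{Dom}^-(g)$ are infinite; $\delta$ if $\mathrm{Dom}(g)$ infinite and $\mathrm{Dom}^-(g)$ finite; $\epsilon$ if $\mathrm{Dom}(g)$ finite. $\operatorname{typ}_u(\mathcal{C},h)$ is the $3\times3$ table (rows and columns indexed $i,d,a$) with entry $\operatorname{typ}(\mathcal{U}^{bc}_{\mathcal{C}h})$ in row $b$, column $c$. *)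

theory Defs
  imports Main
begin

datatype 'f dtable = DT (cols: "'f list") (rows: "nat list set") (dec: "nat list \<Rightarrow> nat set")

definition sub_rows :: "'f dtable \<Rightarrow> ('f \<times> nat) list \<Rightarrow> nat list set" where
  "sub_rows T \<alpha> = {r \<in> rows T. \<forall>(f,\<delta>) \<in> set \<alpha>.
      \<forall>j < length (cols T). cols T ! j = f \<longrightarrow> r ! j = \<delta>}"

text \<open>A tree is the (nonempty)
list of children of the unlabelled root.\<close>

datatype 'f dnode = Term nat | Work 'f "(nat \<times> 'f dnode) list"

type_synonym 'f dtree = "'f dnode list"

inductive wf_node :: "nat \<Rightarrow> 'f set \<Rightarrow> 'f dnode \<Rightarrow> bool" for k F where
  "wf_node k F (Term m)"
| "f \<in> F \<Longrightarrow> es \<noteq> [] \<Longrightarrow> \<forall>\<delta> t. (\<delta>, t) \<in> set es \<longrightarrow> \<delta> < k \<and> wf_node k F t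
    \<Longrightarrow> wf_node k F (Work f es)"

inductive det_node :: "'f dnode \<Rightarrow> bool" where
  "det_node (Term m)"
| "distinct (map fst es) \<Longrightarrow> \<forall>\<delta> t. (\<delta>, t) \<in> set es \<longrightarrow> det_node t
    \<Longrightarrow> det_node (Work f es)"

text \<open>node_path t p m: a path from t to a terminal node; p = pi(xi), m = tau(xi).\<close>
inductive node_path :: "'f dnode \<Rightarrow> ('f \<times> nat) list \<Rightarrow> nat \<Rightarrow> bool" where
  "node_path (Term m) [] m"
| "(\<delta>, t) \<in> set es \<Longrightarrow> node_path t p m \<Longrightarrow> node_path (Work f es) ((f, \<delta>) # p) m"

definition tree_path :: "'f dtree \<Rightarrow> ('f \<times> nat) list \<Rightarrow> nat \<Rightarrow> bool" where
  "tree_path \<Gamma> p m \<longleftrightarrow> (\<exists>t \<in> set \<Gamma>. node_path t p m)"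

definition wf_tree :: "nat \<Rightarrow> 'f set \<Rightarrow> 'f dtree \<Rightarrow> bool" where
  "wf_tree k F \<Gamma> \<longleftrightarrow> \<Gamma> \<noteq> [] \<and> (\<forall>t \<in> set \<Gamma>. wf_node k F t)"

definition det_tree :: "'f dtree \<Rightarrow> bool" where
  "det_tree \<Gamma> \<longleftrightarrow> length \<Gamma> = 1 \<and> (\<forall>t \<in> set \<Gamma>. det_node t)"

definition tree_depth :: "'f dtree \<Rightarrow> nat" where
  "tree_depth \<Gamma> = Max {length p | p m. tree_path \<Gamma> p m}"

definition is_ndt :: "nat \<Rightarrow> 'f dtable \<Rightarrow> 'f dtree \<Rightarrow> bool" where
  "is_ndt k T \<Gamma> \<longleftrightarrow> wf_tree k (set (cols T)) \<Gamma>
     \<and> (\<Union>{sub_rows T p | p m. tree_path \<Gamma> p m}) = rows T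
     \<and> (\<forall>p m. tree_path \<Gamma> p m \<longrightarrow> (\<forall>r \<in> sub_rows T p. m \<in> dec T r))"

definition is_dt :: "nat \<Rightarrow> 'f dtable \<Rightarrow> 'f dtree \<Rightarrow> bool" where
  "is_dt k T \<Gamma> \<longleftrightarrow> is_ndt k T \<Gamma> \<and> det_tree \<Gamma>"

definition h_i :: "'f dtable \<Rightarrow> nat" where
  "h_i T = length (cols T)"

definition h_d :: "nat \<Rightarrow> 'f dtable \<Rightarrow> nat" where
  "h_d k T = (LEAST h. \<exists>\<Gamma>. is_dt k T \<Gamma> \<and> tree_depth \<Gamma> = h)"

definition h_a :: "nat \<Rightarrow> 'f dtable \<Rightarrow> nat" where
  "h_a k T = (LEAST h. \<exists>\<Gamma>. is_ndt k T \<Gamma> \<and> tree_depth \<Gamma> = h)"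

definition prob_table :: "'a set \<Rightarrow> ('a \<Rightarrow> nat) list \<Rightarrow> (nat list \<Rightarrow> nat set) \<Rightarrow> ('a \<Rightarrow> nat) dtable" where
  "prob_table A fs \<nu> = DT fs {map (\<lambda>f. f x) fs | x. x \<in> A} \<nu>"

definition Tab :: "nat \<Rightarrow> 'a set \<Rightarrow> ('a \<Rightarrow> nat) set \<Rightarrow> ('a \<Rightarrow> nat) dtable set" where
  "Tab k A F = {prob_table A fs \<nu> | fs \<nu>. fs \<noteq> [] \<and> set fs \<subseteq> F \<and>
      (\<forall>\<delta>. length \<delta> = length fs \<and> set \<delta> \<subseteq> {..<k} \<longrightarrow> finite (\<nu> \<delta>) \<and> \<nu> \<delta> \<noteq> {})}"

definition Ufun :: "'t set \<Rightarrow> ('t \<Rightarrow> nat) \<Rightarrow> ('t \<Rightarrow> nat) \<Rightarrow> nat \<Rightarrow> nat option" where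
  "Ufun C hb hc n = (let S = {hb T | T. T \<in> C \<and> hc T \<le> n} in
      if S \<noteq> {} \<and> finite S then Some (Max S) else None)"

definition Dom :: "(nat \<Rightarrow> nat option) \<Rightarrow> nat set" where
  "Dom g = {n. g n \<noteq> None}"
definition Dom_plus :: "(nat \<Rightarrow> nat option) \<Rightarrow> nat set" where
  "Dom_plus g = {n. \<exists>m. g n = Some m \<and> m \<ge> n}"
definition Dom_minus :: "(nat \<Rightarrow> nat option) \<Rightarrow> nat set" where
  "Dom_minus g = {n. \<exists>m. g n = Some m \<and> m \<le> n}"
definition bounded_above :: "(nat \<Rightarrow> nat option) \<Rightarrow> bool" where
  "bounded_above g \<longleftrightarrow> (\<exists>B. \<forall>n m. g n = Some m \<longrightarrow> m \<le> B)"

datatype ftype = TAlpha | TBeta | TGamma | TDelta | TEps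

definition typ_of :: "(nat \<Rightarrow> nat option) \<Rightarrow> ftype" where
  "typ_of g =
    (if infinite (Dom g) \<and> bounded_above g then TAlpha
     else if infinite (Dom g) \<and> finite (Dom_plus g) \<and> \<not> bounded_above g then TBeta
     else if infinite (Dom_plus g) \<and> infinite (Dom_minus g) then TGamma
     else if infinite (Dom g) \<and> finite (Dom_minus g) then TDelta
     else if finite (Dom g) then TEps
     else undefined)"

datatype hkind = Ki | Kd | Ka

definition hmeas :: "nat \<Rightarrow> hkind \<Rightarrow> 'f dtable \<Rightarrow> nat" where
  "hmeas k b = (case b of Ki \<Rightarrow> h_i | Kd \<Rightarrow> h_d k | Ka \<Rightarrow> h_a k)"

text \<open>typ_u(C,h): entry in row b, column c.\<close>
definition typ_u :: "nat \<Rightarrow> 'f dtable set \<Rightarrow> hkind \<Rightarrow> hkind \<Rightarrow> ftype" where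
  "typ_u k C b c = typ_of (Ufun C (hmeas k b) (hmeas k c))"

definition l3 :: "nat \<Rightarrow> nat \<Rightarrow> nat" where
  "l3 i j = (if j \<le> i then 0 else 1)"

definition F3 :: "(nat \<Rightarrow> nat) set" where
  "F3 = {l3 i | i. i \<ge> 1}"

definition t3 :: "hkind \<Rightarrow> hkind \<Rightarrow> ftype" where
  "t3 b c = (case (b, c) of
      (Ki, Ki) \<Rightarrow> TGamma | (Ki, Kd) \<Rightarrow> TEps  | (Ki, Ka) \<Rightarrow> TEps
    | (Kd, Ki) \<Rightarrow> TBeta  | (Kd, Kd) \<Rightarrow> TGamma | (Kd, Ka) \<Rightarrow> TEps
    | (Ka, Ki) \<Rightarrow> TAlpha | (Ka, Kd) \<Rightarrow> TAlpha | (Ka, Ka) \<Rightarrow> TAlpha)"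

end

theory Submission
  imports Defs
begin


lemma np_Term[simp]: "node_path (Term m) p e \<longleftrightarrow> p = [] \<and> e = m"
  by (auto elim: node_path.cases intro: node_path.intros)

lemma np_Work[simp]: "node_path (Work f es) p e \<longleftrightarrow>
   (\<exists>\<delta> t q. (\<delta>, t) \<in> set es \<and> p = (f, \<delta>) # q \<and> node_path t q e)"
  apply (rule iffI)
   apply (erule node_path.cases; blast)
  by (auto intro: node_path.intros)

lemma np_finite: "finite {(p, e). node_path t p e}"
proof (induction t)
  case (Term x)
  then show ?case by simp
next
  case (Work f es)
  have "{(p, e). node_path (Work f es) p e} =
     (\<Union>(\<delta>, t) \<in> set es. (\<lambda>(q, e). ((f, \<delta>) # q, e)) ` {(p, e). node_path t p e})"
    by auto
  moreover have "finite (\<Union>(\<delta>, t) \<in> set es. (\<lambda>(q, e). ((f, \<delta>) # q, e)) ` {(p, e). node_path t p e})"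
    using Work by (auto simp: prod_set_simps)
  ultimately show ?case by simp
qed

lemma np_exists: "wf_node k F t \<Longrightarrow> \<exists>p e. node_path t p e"
proof (induction t rule: wf_node.induct)
  case (1 m)
  then show ?case by simp
next
  case (2 f es)
  then obtain \<delta> t where "(\<delta>, t) \<in> set es" by (cases es) auto
  with 2 show ?case by fastforce
qed

lemma np_attrs: "node_path t p e \<Longrightarrow> wf_node k F t \<Longrightarrow> \<forall>(f, \<delta>) \<in> set p. f \<in> F \<and> \<delta> < k"
proof (induction t p e rule: node_path.induct)
  case (1 m)
  then show ?case by simp
next
  case (2 \<delta> t es p m f)
  from 2(4) have "f \<in> F" "\<delta> < k" "wf_node k F t" using 2(1) by (auto elim: wf_node.cases)
  with 2 show ?case by auto
qed

lemma np_card: "wf_node 2 F t \<Longrightarrow> det_node t \<Longrightarrow> (\<forall>p e. node_path t p e \<longrightarrow> length p \<le> d)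
   \<Longrightarrow> card {e. \<exists>p. node_path t p e} \<le> 2 ^ d"
proof (induction t arbitrary: d)
  case (Term x)
  then show ?case by simp
next
  case (Work f es)
  from Work.prems(1) have wf: "es \<noteq> []" "\<forall>\<delta> t. (\<delta>, t) \<in> set es \<longrightarrow> \<delta> < 2 \<and> wf_node 2 F t"
    by (auto elim: wf_node.cases)
  from Work.prems(2) have dt: "distinct (map fst es)" "\<forall>\<delta> t. (\<delta>, t) \<in> set es \<longrightarrow> det_node t"
    by (auto elim: det_node.cases)
  obtain \<delta>0 t0 where "(\<delta>0, t0) \<in> set es" using wf(1) by (cases es) auto
  then obtain p0 e0 where "node_path t0 p0 e0" using wf np_exists by blast
  then have "node_path (Work f es) ((f,\<delta>0) # p0) e0" using \<open>(\<delta>0, t0) \<in> set es\<close> by auto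
  with Work.prems(3) obtain d' where d': "d = Suc d'" by (cases d) fastforce+
  have len: "length es \<le> 2"
  proof -
    have "length es = card (set (map fst es))" using dt(1) by (metis distinct_card length_map)
    also have "set (map fst es) \<subseteq> {0, 1}" using wf(2) by force
    then have "card (set (map fst es)) \<le> card {0::nat, 1}" by (intro card_mono) auto
    finally show ?thesis by simp
  qed
  have eq: "{e. \<exists>p. node_path (Work f es) p e} = (\<Union>x \<in> set es. {e. \<exists>p. node_path (snd x) p e})"
    by force
  have ch: "card {e. \<exists>p. node_path (snd x) p e} \<le> 2 ^ d'" if "x \<in> set es" for x
  proof -
    obtain \<delta> t where x: "x = (\<delta>, t)" by (cases x)
    have "card {e. \<exists>p. node_path t p e} \<le> 2 ^ d'"
    proof (rule Work.IH)
      show "x \<in> set es" by fact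
      show "t \<in> Basic_BNFs.snds x" using x by (simp add: prod_set_defs)
      show "wf_node 2 F t" "det_node t" using wf dt that x by auto
      show "\<forall>p e. node_path t p e \<longrightarrow> length p \<le> d'"
      proof (intro allI impI)
        fix p e assume "node_path t p e"
        then have "node_path (Work f es) ((f, \<delta>) # p) e" using that x by auto
        then show "length p \<le> d'" using Work.prems(3) d' by fastforce
      qed
    qed
    then show ?thesis using x by simp
  qed
  have "card {e. \<exists>p. node_path (Work f es) p e} \<le> (\<Sum>x \<in> set es. card {e. \<exists>p. node_path (snd x) p e})"
    unfolding eq by (rule card_UN_le) simp
  also have "\<dots> \<le> (\<Sum>x \<in> set es. 2 ^ d')" by (rule sum_mono) (use ch in auto)
  also have "\<dots> = card (set es) * 2 ^ d'" by simp
  also have "\<dots> \<le> 2 * 2 ^ d'" using len card_length[of es] by (intro mult_right_mono) auto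
  finally show ?case using d' by simp
qed



definition row :: "(nat \<Rightarrow> nat) list \<Rightarrow> nat \<Rightarrow> nat list" where
  "row fs y = map (\<lambda>f. f y) fs"

lemma pt_simps[simp]: "cols (prob_table A fs \<nu>) = fs" "dec (prob_table A fs \<nu>) = \<nu>"
  "rows (prob_table A fs \<nu>) = {row fs x | x. x \<in> A}"
  by (auto simp: prob_table_def row_def)

lemma sub_rows_pt: "r \<in> sub_rows (prob_table A fs \<nu>) p \<longleftrightarrow>
   (\<exists>y \<in> A. r = row fs y \<and> (\<forall>(f, \<delta>) \<in> set p. f \<in> set fs \<longrightarrow> f y = \<delta>))"
  unfolding sub_rows_def by (auto simp: row_def in_set_conv_nth) blast+

lemma l3_0[simp]: "l3 c y = 0 \<longleftrightarrow> y \<le> c" and l3_1[simp]: "l3 c y = Suc 0 \<longleftrightarrow> c < y"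
  and l3_lt[simp]: "l3 c y < 2"
  by (auto simp: l3_def)

lemma l3_inj: "inj l3"
proof (rule injI)
  fix a b assume "l3 a = l3 b"
  then have "l3 a a = l3 b a" "l3 a b = l3 b b" by auto
  then show "a = b" by (auto simp: l3_def split: if_splits)
qed

lemma td_finite: "finite {length p | p m. tree_path \<Gamma> p m}"
proof -
  have "{length p | p m. tree_path \<Gamma> p m} = (\<lambda>(p, m). length p) ` (\<Union>t\<in>set \<Gamma>. {(p, e). node_path t p e})"
    by (auto simp: tree_path_def)
  moreover have "finite ((\<lambda>(p, m). length p) ` (\<Union>t\<in>set \<Gamma>. {(p, e). node_path t p e}))"
    by (intro finite_imageI finite_UN_I finite_set np_finite)
  ultimately show ?thesis by simp
qed

lemma td_ge: "tree_path \<Gamma> p m \<Longrightarrow> length p \<le> tree_depth \<Gamma>"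
  unfolding tree_depth_def using td_finite by (intro Max_ge) auto

lemma td_le: "\<forall>t\<in>set \<Gamma>. wf_node k F t \<Longrightarrow> \<Gamma> \<noteq> [] \<Longrightarrow> (\<forall>p m. tree_path \<Gamma> p m \<longrightarrow> length p \<le> B)
   \<Longrightarrow> tree_depth \<Gamma> \<le> B"
proof -
  assume a: "\<forall>t\<in>set \<Gamma>. wf_node k F t" "\<Gamma> \<noteq> []" "\<forall>p m. tree_path \<Gamma> p m \<longrightarrow> length p \<le> B"
  obtain t where "t \<in> set \<Gamma>" using a(2) by (cases \<Gamma>) auto
  then obtain p e where "tree_path \<Gamma> p e" using a(1) np_exists unfolding tree_path_def by blast
  then show ?thesis unfolding tree_depth_def using td_finite a(3)
    by (subst Max_le_iff) auto
qed

fun tr :: "(nat \<Rightarrow> nat) \<Rightarrow> nat list \<Rightarrow> nat \<Rightarrow> (nat \<Rightarrow> nat) dnode" where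
  "tr D [] x = Term (D x)"
| "tr D [c] x = Work (l3 c) [(0, Term (D x)), (1, Term (D (Suc c)))]"
| "tr D (c1 # c2 # cs) x = Work (l3 c2) [(0, Work (l3 c1) [(0, Term (D x)), (1, Term (D (Suc c1)))]),
     (1, tr D cs (Suc c2))]"

lemma tr_sound: "node_path (tr D cs x) p e \<Longrightarrow> sorted_wrt (<) cs \<Longrightarrow> \<forall>c\<in>set cs. x \<le> c \<Longrightarrow> x \<le> y
  \<Longrightarrow> \<forall>(f, \<delta>) \<in> set p. f y = \<delta> \<Longrightarrow> \<exists>z\<ge>x. e = D z \<and> (\<forall>c\<in>set cs. y \<le> c \<longleftrightarrow> z \<le> c)"
proof (induction D cs x arbitrary: p e y rule: tr.induct)
  case (1 D x)
  then show ?case by auto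
next
  case (2 D c x)
  from 2(1) obtain \<delta> where "p = [(l3 c, \<delta>)]" "(\<delta> = 0 \<and> e = D x) \<or> (\<delta> = 1 \<and> e = D (Suc c))" by auto
  then show ?case using 2(3,4,5) by (elim disjE; intro exI[of _ x] exI[of _ "Suc c"]) auto
next
  case (3 D c1 c2 cs x)
  from 3(2) obtain \<delta> t q where dt: "(\<delta>, t) \<in> set [(0, Work (l3 c1) [(0, Term (D x)), (1, Term (D (Suc c1)))]),
     (1, tr D cs (Suc c2))]" "p = (l3 c2, \<delta>) # q" "node_path t q e" by auto
  show ?case
  proof (cases "\<delta> = 0")
    case True
    then have t: "t = Work (l3 c1) [(0, Term (D x)), (1, Term (D (Suc c1)))]" using dt by auto
    have "y \<le> c2" using 3(6) dt(2) True by auto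
    from dt(3)[unfolded t] obtain \<delta>' where q: "q = [(l3 c1, \<delta>')]" "(\<delta>' = 0 \<and> e = D x) \<or> (\<delta>' = 1 \<and> e = D (Suc c1))"
      by auto
    have "l3 c1 y = \<delta>'" using 3(6) dt(2) q by auto
    have s: "c1 \<le> c2" "\<forall>c\<in>set cs. c2 \<le> c" using 3(3) by auto
    show ?thesis
    proof (cases "\<delta>' = 0")
      case True
      then show ?thesis using q \<open>l3 c1 y = \<delta>'\<close> \<open>y \<le> c2\<close> s 3(4) by (intro exI[of _ x]) auto
    next
      case False
      then show ?thesis using q \<open>l3 c1 y = \<delta>'\<close> \<open>y \<le> c2\<close> s 3(4) by (intro exI[of _ "Suc c1"]) auto
    qed
  next
    case False
    then have t: "t = tr D cs (Suc c2)" "\<delta> = 1" using dt by auto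
    have "c2 < y" using 3(6) dt(2) t by auto
    have s: "c1 \<le> c2" "\<forall>c\<in>set cs. Suc c2 \<le> c" "sorted_wrt (<) cs" using 3(3) by (auto simp: less_eq_Suc_le[symmetric])
    have "\<forall>(f, \<delta>) \<in> set q. f y = \<delta>" using 3(6) dt(2) by auto
    then obtain z where z: "z \<ge> Suc c2" "e = D z" "\<forall>c\<in>set cs. y \<le> c \<longleftrightarrow> z \<le> c"
      using 3(1)[OF _ s(3) s(2), of q e y] dt(3) t \<open>c2 < y\<close> by auto
    then show ?thesis using s \<open>c2 < y\<close> 3(4) by (intro exI[of _ z]) auto
  qed
qed

lemma tr_complete: "x \<le> y \<Longrightarrow> \<exists>p e. node_path (tr D cs x) p e \<and> (\<forall>(f, \<delta>) \<in> set p. f y = \<delta>)"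
proof (induction D cs x arbitrary: y rule: tr.induct)
  case (1 D x)
  then show ?case by auto
next
  case (2 D c x)
  show ?case
  proof (cases "y \<le> c")
    case True
    then show ?thesis by (intro exI[of _ "[(l3 c, 0)]"] exI[of _ "D x"]) auto
  next
    case False
    then show ?thesis by (intro exI[of _ "[(l3 c, 1)]"] exI[of _ "D (Suc c)"]) auto
  qed
next
  case (3 D c1 c2 cs x)
  show ?case
  proof (cases "y \<le> c2")
    case True
    show ?thesis
    proof (cases "y \<le> c1")
      case True
      then show ?thesis using \<open>y \<le> c2\<close> by (intro exI[of _ "[(l3 c2, 0), (l3 c1, 0)]"] exI[of _ "D x"]) auto
    next
      case False
      then show ?thesis using \<open>y \<le> c2\<close> by (intro exI[of _ "[(l3 c2, 0), (l3 c1, 1)]"] exI[of _ "D (Suc c1)"]) auto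
    qed
  next
    case False
    then obtain p e where "node_path (tr D cs (Suc c2)) p e" "\<forall>(f, \<delta>) \<in> set p. f y = \<delta>"
      using 3(1)[of y] by auto
    then show ?thesis using False by (intro exI[of _ "(l3 c2, 1) # p"] exI[of _ e]) auto
  qed
qed

lemma tr_wf: "\<forall>c\<in>set cs. l3 c \<in> F \<Longrightarrow> wf_node 2 F (tr D cs x)"
  by (induction D cs x rule: tr.induct) (auto intro!: wf_node.intros)

lemma tr_det: "det_node (tr D cs x)"
  by (induction D cs x rule: tr.induct) (auto intro!: det_node.intros)

lemma tr_len: "node_path (tr D cs x) p e \<Longrightarrow> length p \<le> length cs \<and> length p \<le> (length cs + 2) div 2"
proof (induction D cs x arbitrary: p e rule: tr.induct)
  case (3 D c1 c2 cs x)
  from 3(2) obtain \<delta> t q where dt: "(\<delta>, t) \<in> set [(0, Work (l3 c1) [(0, Term (D x)), (1, Term (D (Suc c1)))]),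
     (1, tr D cs (Suc c2))]" "p = (l3 c2, \<delta>) # q" "node_path t q e" by auto
  then consider "t = Work (l3 c1) [(0, Term (D x)), (1, Term (D (Suc c1)))]" | "t = tr D cs (Suc c2)" by auto
  then show ?case
  proof cases
    case 1
    then show ?thesis using dt by auto
  next
    case 2
    then show ?thesis using dt 3(1)[of q e] by auto
  qed
qed auto



lemma F3_l3: "f \<in> F3 \<Longrightarrow> \<exists>c. f = l3 c"
  by (auto simp: F3_def)

lemma row_len[simp]: "length (row fs y) = length fs"
  by (simp add: row_def)

lemma row_set: "set fs \<subseteq> F3 \<Longrightarrow> set (row fs y) \<subseteq> {..<2}"
  by (auto simp: row_def dest!: F3_l3)

lemma row_eq: "set fs \<subseteq> F3 \<Longrightarrow> (\<forall>c. l3 c \<in> set fs \<longrightarrow> (y \<le> c \<longleftrightarrow> z \<le> c)) \<Longrightarrow> row fs y = row fs z"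
  unfolding row_def
proof (rule map_cong[OF refl])
  fix f assume "set fs \<subseteq> F3" "\<forall>c. l3 c \<in> set fs \<longrightarrow> (y \<le> c \<longleftrightarrow> z \<le> c)" "f \<in> set fs"
  then obtain c where "f = l3 c" "l3 c \<in> set fs" "y \<le> c \<longleftrightarrow> z \<le> c" using F3_l3 by blast
  then show "f y = f z" by (simp add: l3_def)
qed

lemma dt_exists:
  assumes fs: "fs \<noteq> []" "set fs \<subseteq> F3"
    and nu: "\<forall>\<delta>. length \<delta> = length fs \<and> set \<delta> \<subseteq> {..<2} \<longrightarrow> finite (\<nu> \<delta>) \<and> \<nu> \<delta> \<noteq> {}"
  shows "\<exists>\<Gamma>. is_dt 2 (prob_table UNIV fs \<nu>) \<Gamma> \<and> tree_depth \<Gamma> \<le> length fs \<and> tree_depth \<Gamma> \<le> (length fs + 2) div 2"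
proof -
  define S where "S = {c. l3 c \<in> set fs}"
  have finS: "finite S" unfolding S_def using l3_inj
    by (metis finite_set finite_vimageI vimage_Collect_eq vimage_def Collect_mem_eq)
  define cs where "cs = sorted_list_of_set S"
  have cs: "set cs = S" "sorted_wrt (<) cs" using finS by (auto simp: cs_def strict_sorted_list_of_set)
  have "length cs = card S" using finS by (simp add: cs_def)
  also have "card S = card (l3 ` S)" using l3_inj by (simp add: card_image inj_on_def inj_def)
  also have "\<dots> \<le> card (set fs)" by (intro card_mono) (auto simp: S_def)
  also have "\<dots> \<le> length fs" by (rule card_length)
  finally have lencs: "length cs \<le> length fs" .
  define D where "D y = (SOME e. e \<in> \<nu> (row fs y))" for y
  have D: "D y \<in> \<nu> (row fs y)" for y
  proof -
    have "\<nu> (row fs y) \<noteq> {}" using nu row_set[OF fs(2)] by auto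
    then show ?thesis unfolding D_def by (simp add: some_in_eq)
  qed
  define \<Gamma> where "\<Gamma> = [tr D cs 0]"
  let ?T = "prob_table UNIV fs \<nu>"
  have wf: "wf_node 2 (set fs) (tr D cs 0)" using cs by (intro tr_wf) (auto simp: S_def)
  have paths: "tree_path \<Gamma> p m \<longleftrightarrow> node_path (tr D cs 0) p m" for p m
    by (simp add: tree_path_def \<Gamma>_def)
  have cover: "\<Union>{sub_rows ?T p | p m. tree_path \<Gamma> p m} = rows ?T"
  proof
    show "\<Union>{sub_rows ?T p | p m. tree_path \<Gamma> p m} \<subseteq> rows ?T"
      by (auto simp: sub_rows_def)
    show "rows ?T \<subseteq> \<Union>{sub_rows ?T p | p m. tree_path \<Gamma> p m}"
    proof
      fix r assume "r \<in> rows ?T"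
      then obtain y where r: "r = row fs y" by auto
      obtain p e where pe: "node_path (tr D cs 0) p e" "\<forall>(f, \<delta>) \<in> set p. f y = \<delta>"
        using tr_complete[of 0 y D cs] by blast
      have "r \<in> sub_rows ?T p" unfolding sub_rows_pt using r pe(2) by (intro bexI[of _ y]) auto
      moreover have "tree_path \<Gamma> p e" using pe(1) paths by simp
      ultimately show "r \<in> \<Union>{sub_rows ?T p | p m. tree_path \<Gamma> p m}" by blast
    qed
  qed
  have dec: "\<forall>p m. tree_path \<Gamma> p m \<longrightarrow> (\<forall>r \<in> sub_rows ?T p. m \<in> dec ?T r)"
  proof (intro allI impI ballI)
    fix p m r assume pm: "tree_path \<Gamma> p m" and "r \<in> sub_rows ?T p"
    then obtain y where y: "r = row fs y" "\<forall>(f, \<delta>) \<in> set p. f \<in> set fs \<longrightarrow> f y = \<delta>"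
      unfolding sub_rows_pt by blast
    have np: "node_path (tr D cs 0) p m" using pm paths by simp
    have "\<forall>(f, \<delta>) \<in> set p. f \<in> set fs \<and> \<delta> < 2" using np_attrs[OF np wf] .
    with y(2) have "\<forall>(f, \<delta>) \<in> set p. f y = \<delta>" by auto
    then obtain z where z: "m = D z" "\<forall>c\<in>set cs. y \<le> c \<longleftrightarrow> z \<le> c"
      using tr_sound[OF np cs(2)] by auto
    have "row fs y = row fs z" using z(2) cs(1) by (intro row_eq[OF fs(2)]) (auto simp: S_def)
    then show "m \<in> dec ?T r" using D[of z] z(1) y(1) by simp
  qed
  have isdt: "is_dt 2 ?T \<Gamma>"
    unfolding is_dt_def is_ndt_def det_tree_def wf_tree_def
    using wf cover dec tr_det by (simp add: \<Gamma>_def)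
  have "tree_depth \<Gamma> \<le> length fs \<and> tree_depth \<Gamma> \<le> (length fs + 2) div 2"
  proof -
    have "\<forall>p m. tree_path \<Gamma> p m \<longrightarrow> length p \<le> length fs \<and> length p \<le> (length fs + 2) div 2"
      using tr_len lencs paths by (meson div_le_mono add_le_mono1 le_trans)
    then show ?thesis using wf
      by (intro conjI td_le[of \<Gamma> 2 "set fs"]) (auto simp: \<Gamma>_def)
  qed
  then show ?thesis using isdt by blast
qed



definition na :: "nat set \<Rightarrow> nat \<Rightarrow> nat" where
  "na S x = (if {c\<in>S. c < x} = {} then Min S else Max {c\<in>S. c < x})"
definition nb :: "nat set \<Rightarrow> nat \<Rightarrow> nat" where
  "nb S x = (if {c\<in>S. x \<le> c} = {} then Max S else Min {c\<in>S. x \<le> c})"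

lemma na_in: "finite S \<Longrightarrow> S \<noteq> {} \<Longrightarrow> na S x \<in> S"
proof (cases "{c\<in>S. c < x} = {}")
  case False
  assume "finite S"
  then have "Max {c\<in>S. c < x} \<in> {c\<in>S. c < x}" using False by (intro Max_in) auto
  moreover have "na S x = Max {c\<in>S. c < x}" using False unfolding na_def by (rule if_not_P)
  ultimately show ?thesis by simp
qed (simp add: na_def Min_in)

lemma nb_in: "finite S \<Longrightarrow> S \<noteq> {} \<Longrightarrow> nb S x \<in> S"
proof (cases "{c\<in>S. x \<le> c} = {}")
  case False
  assume "finite S"
  then have "Min {c\<in>S. x \<le> c} \<in> {c\<in>S. x \<le> c}" using False by (intro Min_in) auto
  moreover have "nb S x = Min {c\<in>S. x \<le> c}" using False unfolding nb_def by (rule if_not_P)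
  ultimately show ?thesis by simp
qed (simp add: nb_def Max_in)

lemma nab_sound:
  assumes "finite S" "c \<in> S" "l3 (na S x) y = l3 (na S x) x" "l3 (nb S x) y = l3 (nb S x) x"
  shows "y \<le> c \<longleftrightarrow> x \<le> c"
proof (cases "c < x")
  case True
  then have ne: "{c\<in>S. c < x} \<noteq> {}" using assms(2) by auto
  have a: "na S x = Max {c\<in>S. c < x}" using ne unfolding na_def by (rule if_not_P)
  have fin: "finite {c\<in>S. c < x}" using assms(1) by simp
  have "c \<le> Max {c\<in>S. c < x}" by (rule Max_ge[OF fin]) (use assms(2) True in simp)
  moreover have "Max {c\<in>S. c < x} \<in> {c\<in>S. c < x}" by (rule Max_in[OF fin ne])
  ultimately have "c \<le> na S x" "na S x < x" unfolding a by auto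
  have "l3 (na S x) y = Suc 0" using assms(3) \<open>na S x < x\<close> l3_1 by metis
  then have "na S x < y" by (simp only: l3_1)
  then have "\<not> y \<le> c" "\<not> x \<le> c" using True \<open>c \<le> na S x\<close> by linarith+
  then show ?thesis by blast
next
  case False
  then have ne: "{c\<in>S. x \<le> c} \<noteq> {}" using assms(2) by auto
  have b: "nb S x = Min {c\<in>S. x \<le> c}" using ne unfolding nb_def by (rule if_not_P)
  have fin: "finite {c\<in>S. x \<le> c}" using assms(1) by simp
  have "Min {c\<in>S. x \<le> c} \<le> c" by (rule Min_le[OF fin]) (use assms(2) False in simp)
  moreover have "Min {c\<in>S. x \<le> c} \<in> {c\<in>S. x \<le> c}" by (rule Min_in[OF fin ne])
  ultimately have "nb S x \<le> c" "x \<le> nb S x" unfolding b by auto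
  have "l3 (nb S x) y = 0" using assms(4) \<open>x \<le> nb S x\<close> l3_0 by metis
  then have "y \<le> nb S x" by (simp only: l3_0)
  then have "y \<le> c" "x \<le> c" using False \<open>nb S x \<le> c\<close> by linarith+
  then show ?thesis by blast
qed

definition nd :: "nat set \<Rightarrow> (nat \<Rightarrow> nat) \<Rightarrow> nat \<Rightarrow> (nat \<Rightarrow> nat) dnode" where
  "nd S D x = Work (l3 (na S x)) [(l3 (na S x) x, Work (l3 (nb S x)) [(l3 (nb S x) x, Term (D x))])]"

lemma nd_path: "node_path (nd S D x) p e \<longleftrightarrow>
   p = [(l3 (na S x), l3 (na S x) x), (l3 (nb S x), l3 (nb S x) x)] \<and> e = D x"
  by (auto simp: nd_def)

lemma ndt_exists:
  assumes fs: "fs \<noteq> []" "set fs \<subseteq> F3"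
    and nu: "\<forall>\<delta>. length \<delta> = length fs \<and> set \<delta> \<subseteq> {..<2} \<longrightarrow> finite (\<nu> \<delta>) \<and> \<nu> \<delta> \<noteq> {}"
  shows "\<exists>\<Gamma>. is_ndt 2 (prob_table UNIV fs \<nu>) \<Gamma> \<and> tree_depth \<Gamma> \<le> 2"
proof -
  define S where "S = {c. l3 c \<in> set fs}"
  have finS: "finite S" unfolding S_def using l3_inj
    by (metis finite_set finite_vimageI vimage_Collect_eq vimage_def Collect_mem_eq)
  obtain f0 where "f0 \<in> set fs" using fs(1) by (cases fs) auto
  then obtain c0 where "l3 c0 \<in> set fs" using fs(2) F3_l3 by blast
  then have neS: "S \<noteq> {}" by (auto simp: S_def)
  define D where "D y = (SOME e. e \<in> \<nu> (row fs y))" for y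
  have D: "D y \<in> \<nu> (row fs y)" for y
  proof -
    have "\<nu> (row fs y) \<noteq> {}" using nu row_set[OF fs(2)] by auto
    then show ?thesis unfolding D_def by (simp add: some_in_eq)
  qed
  define M where "M = Max S"
  define \<Gamma> where "\<Gamma> = map (nd S D) [0..<Suc (Suc M)]"
  let ?T = "prob_table UNIV fs \<nu>"
  have wf: "wf_node 2 (set fs) (nd S D x)" for x
    using na_in[OF finS neS, of x] nb_in[OF finS neS, of x]
    by (auto simp: nd_def S_def intro!: wf_node.intros)
  have paths: "tree_path \<Gamma> p m \<longleftrightarrow> (\<exists>x < Suc (Suc M). node_path (nd S D x) p m)" for p m
    by (auto simp: tree_path_def \<Gamma>_def simp del: upt_Suc)
  have cover: "\<Union>{sub_rows ?T p | p m. tree_path \<Gamma> p m} = rows ?T"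
  proof
    show "\<Union>{sub_rows ?T p | p m. tree_path \<Gamma> p m} \<subseteq> rows ?T"
      by (auto simp: sub_rows_def)
    show "rows ?T \<subseteq> \<Union>{sub_rows ?T p | p m. tree_path \<Gamma> p m}"
    proof
      fix r assume "r \<in> rows ?T"
      then obtain y where r: "r = row fs y" by auto
      define x where "x = min y (Suc M)"
      have cons: "l3 c y = l3 c x" if "c \<in> S" for c
      proof -
        have "c \<le> M" using that finS by (simp add: M_def)
        then show ?thesis by (auto simp: x_def l3_def)
      qed
      define p where "p = [(l3 (na S x), l3 (na S x) x), (l3 (nb S x), l3 (nb S x) x)]"
      have "tree_path \<Gamma> p (D x)" unfolding paths nd_path p_def by (intro exI[of _ x]) (auto simp: x_def)
      moreover have "r \<in> sub_rows ?T p" unfolding sub_rows_pt using r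
        cons[OF na_in[OF finS neS, of x]] cons[OF nb_in[OF finS neS, of x]]
        by (intro bexI[of _ y]) (auto simp: p_def)
      ultimately show "r \<in> \<Union>{sub_rows ?T p | p m. tree_path \<Gamma> p m}" by blast
    qed
  qed
  have dec: "\<forall>p m. tree_path \<Gamma> p m \<longrightarrow> (\<forall>r \<in> sub_rows ?T p. m \<in> dec ?T r)"
  proof (intro allI impI ballI)
    fix p m r assume pm: "tree_path \<Gamma> p m" and "r \<in> sub_rows ?T p"
    then obtain y where y: "r = row fs y" "\<forall>(f, \<delta>) \<in> set p. f \<in> set fs \<longrightarrow> f y = \<delta>"
      unfolding sub_rows_pt by blast
    obtain x where np: "p = [(l3 (na S x), l3 (na S x) x), (l3 (nb S x), l3 (nb S x) x)]" "m = D x"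
      using pm unfolding paths nd_path by blast
    have inS: "na S x \<in> S" "nb S x \<in> S" using na_in[OF finS neS] nb_in[OF finS neS] by auto
    have "l3 (na S x) y = l3 (na S x) x" "l3 (nb S x) y = l3 (nb S x) x"
      using y(2) inS np(1) by (auto simp: S_def)
    then have "\<forall>c\<in>S. y \<le> c \<longleftrightarrow> x \<le> c" using nab_sound[OF finS] by blast
    then have "row fs y = row fs x" by (intro row_eq[OF fs(2)]) (auto simp: S_def)
    then show "m \<in> dec ?T r" using D[of x] np(2) y(1) by simp
  qed
  have isndt: "is_ndt 2 ?T \<Gamma>"
    unfolding is_ndt_def wf_tree_def
    using wf cover dec by (auto simp: \<Gamma>_def)
  have "tree_depth \<Gamma> \<le> 2"
  proof (rule td_le[of \<Gamma> 2 "set fs"])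
    show "\<forall>t\<in>set \<Gamma>. wf_node 2 (set fs) t" using wf by (auto simp: \<Gamma>_def)
    show "\<Gamma> \<noteq> []" by (simp add: \<Gamma>_def)
    show "\<forall>p m. tree_path \<Gamma> p m \<longrightarrow> length p \<le> 2" unfolding paths nd_path by auto
  qed
  then show ?thesis using isndt by blast
qed



abbreviation "CC \<equiv> Tab 2 (UNIV :: nat set) F3"

lemma Tab_E: "T \<in> CC \<Longrightarrow> \<exists>fs \<nu>. T = prob_table UNIV fs \<nu> \<and> fs \<noteq> [] \<and> set fs \<subseteq> F3 \<and>
   (\<forall>\<delta>. length \<delta> = length fs \<and> set \<delta> \<subseteq> {..<2} \<longrightarrow> finite (\<nu> \<delta>) \<and> \<nu> \<delta> \<noteq> {})"
  by (auto simp: Tab_def)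

lemma Fi: "T \<in> CC \<Longrightarrow> 1 \<le> h_i T"
  by (auto simp: Tab_def h_i_def Suc_le_eq)

lemma Fd: "T \<in> CC \<Longrightarrow> h_d 2 T \<le> h_i T \<and> h_d 2 T \<le> (h_i T + 2) div 2"
proof -
  assume "T \<in> CC"
  then obtain fs \<nu> where T: "T = prob_table UNIV fs \<nu>" "fs \<noteq> []" "set fs \<subseteq> F3"
    "\<forall>\<delta>. length \<delta> = length fs \<and> set \<delta> \<subseteq> {..<2} \<longrightarrow> finite (\<nu> \<delta>) \<and> \<nu> \<delta> \<noteq> {}"
    using Tab_E by blast
  obtain \<Gamma> where G: "is_dt 2 T \<Gamma>" "tree_depth \<Gamma> \<le> length fs" "tree_depth \<Gamma> \<le> (length fs + 2) div 2"
    using dt_exists[OF T(2,3,4)] T(1) by blast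
  have "h_d 2 T \<le> tree_depth \<Gamma>" unfolding h_d_def using G(1) by (intro Least_le) blast
  then show ?thesis using G T(1) by (simp add: h_i_def)
qed

lemma hd_ex: "T \<in> CC \<Longrightarrow> \<exists>\<Gamma>. is_dt 2 T \<Gamma> \<and> tree_depth \<Gamma> = h_d 2 T"
proof -
  assume "T \<in> CC"
  then obtain fs \<nu> where T: "T = prob_table UNIV fs \<nu>" "fs \<noteq> []" "set fs \<subseteq> F3"
    "\<forall>\<delta>. length \<delta> = length fs \<and> set \<delta> \<subseteq> {..<2} \<longrightarrow> finite (\<nu> \<delta>) \<and> \<nu> \<delta> \<noteq> {}"
    using Tab_E by blast
  obtain \<Gamma> where G: "is_dt 2 T \<Gamma>"
    using dt_exists[OF T(2,3,4)] T(1) by blast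
  show ?thesis unfolding h_d_def by (rule LeastI_ex) (use G in blast)
qed

lemma Fa: "T \<in> CC \<Longrightarrow> h_a 2 T \<le> h_d 2 T \<and> h_a 2 T \<le> 2"
proof -
  assume C: "T \<in> CC"
  then obtain fs \<nu> where T: "T = prob_table UNIV fs \<nu>" "fs \<noteq> []" "set fs \<subseteq> F3"
    "\<forall>\<delta>. length \<delta> = length fs \<and> set \<delta> \<subseteq> {..<2} \<longrightarrow> finite (\<nu> \<delta>) \<and> \<nu> \<delta> \<noteq> {}"
    using Tab_E by blast
  obtain \<Gamma> where G: "is_ndt 2 T \<Gamma>" "tree_depth \<Gamma> \<le> 2"
    using ndt_exists[OF T(2,3,4)] T(1) by blast
  have 1: "h_a 2 T \<le> 2" unfolding h_a_def using G by (intro le_trans[OF Least_le]) blast+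
  obtain \<Gamma>' where G': "is_dt 2 T \<Gamma>'" "tree_depth \<Gamma>' = h_d 2 T" using hd_ex[OF C] by blast
  have "h_a 2 T \<le> h_d 2 T" unfolding h_a_def using G' by (intro Least_le) (auto simp: is_dt_def)
  with 1 show ?thesis by simp
qed

lemma F0: "1 \<le> k \<Longrightarrow> \<exists>T\<in>CC. h_i T = k \<and> h_d 2 T = 0"
proof -
  assume k: "1 \<le> k"
  define T where "T = prob_table (UNIV :: nat set) (replicate k (l3 1)) (\<lambda>_. {0})"
  have l31: "l3 1 \<in> F3" by (auto simp: F3_def)
  have TC: "T \<in> CC" unfolding Tab_def T_def using k l31
    by (intro CollectI exI[of _ "replicate k (l3 1)"] exI[of _ "\<lambda>_. {0}"]) auto
  have tp: "tree_path [Term 0] p m \<longleftrightarrow> p = [] \<and> m = 0" for p m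
    by (simp add: tree_path_def)
  have sr: "sub_rows T [] = rows T" by (simp add: sub_rows_def)
  have dt: "is_dt 2 T [Term 0]"
    unfolding is_dt_def is_ndt_def det_tree_def wf_tree_def tp
    using sr by (auto simp: T_def intro: wf_node.intros det_node.intros)
  have "tree_depth [Term 0] = 0" unfolding tree_depth_def tp by simp
  then have "h_d 2 T \<le> 0" unfolding h_d_def using dt by (intro Least_le) (auto intro!: exI[of _ "[Term 0]"])
  moreover have "h_i T = k" by (simp add: T_def h_i_def)
  ultimately show ?thesis using TC by blast
qed

lemma sum_row0: "sum_list (map (\<lambda>i. l3 i (Suc j)) [1..<Suc m]) = min j m"
proof (induction m)
  case 0
  then show ?case by simp
next
  case (Suc m)
  have "[1..<Suc (Suc m)] = [1..<Suc m] @ [Suc m]" by simp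
  then have "sum_list (map (\<lambda>i. l3 i (Suc j)) [1..<Suc (Suc m)]) =
     sum_list (map (\<lambda>i. l3 i (Suc j)) [1..<Suc m]) + l3 (Suc m) (Suc j)"
    by (simp del: upt_Suc)
  then show ?case using Suc by (simp add: l3_def)
qed

lemma sum_row: "sum_list (row (map l3 [1..<Suc m]) (Suc j)) = min j m"
  using sum_row0[of j m] by (simp add: row_def comp_def del: upt_Suc)

lemma F5: "\<exists>T\<in>CC. B < h_d 2 T"
proof -
  define m :: nat where "m = 2 ^ B"
  have m1: "1 \<le> m" by (simp add: m_def)
  define fs where "fs = map l3 [1..<Suc m]"
  define T where "T = prob_table (UNIV :: nat set) fs (\<lambda>\<delta>. {sum_list \<delta>})"
  have fsF: "set fs \<subseteq> F3" by (auto simp: fs_def F3_def)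
  have fsne: "fs \<noteq> []" using m1 by (simp add: fs_def)
  have TC: "T \<in> CC" unfolding Tab_def T_def using fsF fsne
    by (intro CollectI exI[of _ fs] exI[of _ "\<lambda>\<delta>. {sum_list \<delta>}"]) auto
  obtain \<Gamma> where G: "is_dt 2 T \<Gamma>" "tree_depth \<Gamma> = h_d 2 T" using hd_ex[OF TC] by blast
  from G(1) obtain t where t: "\<Gamma> = [t]" "wf_node 2 (set fs) t" "det_node t"
    unfolding is_dt_def det_tree_def is_ndt_def wf_tree_def
    by (auto simp: T_def length_Suc_conv)
  have tp: "tree_path \<Gamma> p e \<longleftrightarrow> node_path t p e" for p e by (simp add: tree_path_def t)
  define E where "E = {e. \<exists>p. node_path t p e}"
  have finE: "finite E"
  proof -
    have "E = snd ` {(p, e). node_path t p e}" by (auto simp: E_def image_def)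
    then show ?thesis using finite_imageI[OF np_finite[of t], of snd] by simp
  qed
  have sub: "{0..m} \<subseteq> E"
  proof
    fix j assume j: "j \<in> {0..m}"
    have r: "row fs (Suc j) \<in> rows T" by (auto simp: T_def)
    have cov: "\<Union>{sub_rows T p | p m. tree_path \<Gamma> p m} = rows T" using G(1) by (simp add: is_dt_def is_ndt_def)
    obtain p e where pe: "tree_path \<Gamma> p e" "row fs (Suc j) \<in> sub_rows T p" using r cov[symmetric] by blast
    have "e \<in> dec T (row fs (Suc j))" using G(1) pe unfolding is_dt_def is_ndt_def by blast
    then have "e = sum_list (row (map l3 [1..<Suc m]) (Suc j))" by (simp add: T_def fs_def del: upt_Suc)
    then have "e = min j m" by (simp only: sum_row)
    then have "e = j" using j by simp
    then show "j \<in> E" using pe(1) tp E_def by blast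
  qed
  have "Suc m = card {0..m}" by simp
  also have "\<dots> \<le> card E" by (rule card_mono[OF finE sub])
  also have "\<dots> \<le> 2 ^ tree_depth \<Gamma>" unfolding E_def
    by (rule np_card[OF t(2) t(3)]) (use td_ge tp in blast)
  finally have "Suc m \<le> 2 ^ tree_depth \<Gamma>" .
  have "B < tree_depth \<Gamma>"
  proof (rule ccontr)
    assume "\<not> B < tree_depth \<Gamma>"
    then have "(2::nat) ^ tree_depth \<Gamma> \<le> 2 ^ B" by (intro power_increasing) auto
    with \<open>Suc m \<le> 2 ^ tree_depth \<Gamma>\<close> show False by (simp add: m_def)
  qed
  then show ?thesis using TC G(2) by auto
qed



lemma Uf_Some_in: "Ufun C hb hc n = Some m \<Longrightarrow> \<exists>T\<in>C. hc T \<le> n \<and> hb T = m"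
proof -
  assume a: "Ufun C hb hc n = Some m"
  let ?S = "{hb T | T. T \<in> C \<and> hc T \<le> n}"
  from a have "?S \<noteq> {}" "finite ?S" "m = Max ?S" unfolding Ufun_def Let_def by (auto split: if_splits)
  then have "m \<in> ?S" using Max_in by blast
  then show ?thesis by blast
qed

lemma Uf_ge: "finite {hb T | T. T \<in> C \<and> hc T \<le> n} \<Longrightarrow> T \<in> C \<Longrightarrow> hc T \<le> n \<Longrightarrow>
   \<exists>m. Ufun C hb hc n = Some m \<and> hb T \<le> m"
proof -
  let ?S = "{hb T | T. T \<in> C \<and> hc T \<le> n}"
  assume a: "finite ?S" "T \<in> C" "hc T \<le> n"
  then have "hb T \<in> ?S" by blast
  then have "?S \<noteq> {}" "hb T \<le> Max ?S" using a(1) by (auto intro: Max_ge)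
  then show ?thesis using a(1) unfolding Ufun_def Let_def by auto
qed

lemma Uf_None: "infinite {hb T | T. T \<in> C \<and> hc T \<le> n} \<Longrightarrow> Ufun C hb hc n = None"
  unfolding Ufun_def Let_def by auto

lemma Uf_fin: fixes hb :: "'a \<Rightarrow> nat" assumes "\<And>T. T \<in> C \<Longrightarrow> hc T \<le> n \<Longrightarrow> hb T \<le> B"
  shows "finite {hb T | T. T \<in> C \<and> hc T \<le> n}"
proof (rule finite_subset[of _ "{..B}"])
  show "{hb T | T. T \<in> C \<and> hc T \<le> n} \<subseteq> {..B}" using assms by auto
qed simp

lemma inf_unb: assumes "\<And>B. \<exists>n\<in>S. B < n" shows "infinite (S :: nat set)"
proof
  assume f: "finite S"
  obtain n where "n \<in> S" "Max S < n" using assms by blast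
  then show False using Max_ge[OF f, of n] by simp
qed

lemma typ_alpha: "infinite (Dom g) \<Longrightarrow> bounded_above g \<Longrightarrow> typ_of g = TAlpha"
  by (simp add: typ_of_def)

lemma typ_beta: "infinite (Dom g) \<Longrightarrow> finite (Dom_plus g) \<Longrightarrow> \<not> bounded_above g \<Longrightarrow> typ_of g = TBeta"
  by (simp add: typ_of_def)

lemma typ_gamma: "\<not> bounded_above g \<Longrightarrow> infinite (Dom_plus g) \<Longrightarrow> infinite (Dom_minus g) \<Longrightarrow> typ_of g = TGamma"
  by (simp add: typ_of_def)

lemma typ_eps: "finite (Dom g) \<Longrightarrow> typ_of g = TEps"
proof -
  assume f: "finite (Dom g)"
  have "Dom_plus g \<subseteq> Dom g" by (auto simp: Dom_plus_def Dom_def)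
  then have "finite (Dom_plus g)" using f finite_subset by blast
  then show ?thesis using f by (simp add: typ_of_def)
qed

lemma unb: "(\<And>B. \<exists>n m. g n = Some m \<and> B < m) \<Longrightarrow> \<not> bounded_above g"
  unfolding bounded_above_def by (meson not_le)

lemma hm[simp]: "hmeas k Ki = h_i" "hmeas k Kd = h_d k" "hmeas k Ka = h_a k"
  by (simp_all add: hmeas_def)

lemma e_ii: "typ_u 2 CC Ki Ki = TGamma"
proof -
  let ?g = "Ufun CC h_i h_i"
  have g: "?g n = Some n" if n1: "1 \<le> n" for n
  proof -
    have fin: "finite {h_i T | T. T \<in> CC \<and> h_i T \<le> n}" by (rule Uf_fin[where B=n]) simp
    obtain T where T: "T \<in> CC" "h_i T = n" using F0[OF n1] by blast
    obtain m where m: "?g n = Some m" "n \<le> m" using Uf_ge[OF fin T(1)] T(2) by auto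
    obtain T' where "T' \<in> CC" "h_i T' \<le> n" "h_i T' = m" using Uf_Some_in[OF m(1)] by blast
    then show ?thesis using m by simp
  qed
  have gS: "?g (Suc B) = Some (Suc B)" for B using g by simp
  have "\<not> bounded_above ?g"
  proof (rule unb)
    fix B show "\<exists>n m. ?g n = Some m \<and> B < m" using gS[of B] by blast
  qed
  moreover have "infinite (Dom_plus ?g)"
  proof (rule inf_unb)
    fix B have "Suc B \<in> Dom_plus ?g" using gS[of B] by (simp add: Dom_plus_def)
    then show "\<exists>n\<in>Dom_plus ?g. B < n" by blast
  qed
  moreover have "infinite (Dom_minus ?g)"
  proof (rule inf_unb)
    fix B have "Suc B \<in> Dom_minus ?g" using gS[of B] by (simp add: Dom_minus_def)
    then show "\<exists>n\<in>Dom_minus ?g. B < n" by blast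
  qed
  ultimately show ?thesis unfolding typ_u_def by (simp add: typ_gamma)
qed

lemma e_id: "typ_u 2 CC Ki c = TEps" if "c = Kd \<or> c = Ka"
proof -
  have hc: "\<And>T. T \<in> CC \<Longrightarrow> hmeas 2 c T \<le> h_d 2 T" using that Fa by auto
  let ?g = "Ufun CC h_i (hmeas 2 c)"
  have "?g n = None" for n
  proof (rule Uf_None, rule inf_unb)
    fix B
    obtain T where "T \<in> CC" "h_i T = Suc B" "h_d 2 T = 0" using F0[of "Suc B"] by auto
    then show "\<exists>x\<in>{h_i T |T. T \<in> CC \<and> hmeas 2 c T \<le> n}. B < x" using hc[of T] by force
  qed
  then have "Dom ?g = {}" by (simp add: Dom_def)
  then show ?thesis unfolding typ_u_def by (simp add: typ_eps)
qed

lemma e_di: "typ_u 2 CC Kd Ki = TBeta"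
proof -
  let ?g = "Ufun CC (h_d 2) h_i"
  have fin: "finite {h_d 2 T | T. T \<in> CC \<and> h_i T \<le> n}" for n by (rule Uf_fin[where B=n]) (use Fd in force)
  have "infinite (Dom ?g)"
  proof (rule inf_unb)
    fix B
    obtain T where "T \<in> CC" "h_i T = Suc B" using F0[of "Suc B"] by auto
    then show "\<exists>n\<in>Dom ?g. B < n" using Uf_ge[OF fin, of T "Suc B"] by (force simp: Dom_def)
  qed
  moreover have "finite (Dom_plus ?g)"
  proof (rule finite_subset[of _ "{..2}"])
    show "Dom_plus ?g \<subseteq> {..2}"
    proof
      fix n assume "n \<in> Dom_plus ?g"
      then obtain m where m: "?g n = Some m" "n \<le> m" by (auto simp: Dom_plus_def)
      obtain T where T: "T \<in> CC" "h_i T \<le> n" "h_d 2 T = m" using Uf_Some_in[OF m(1)] by blast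
      have "m \<le> (h_i T + 2) div 2" using Fd[OF T(1)] T(3) by simp
      then show "n \<in> {..2}" using m(2) T(2) by simp
    qed
  qed simp
  moreover have "\<not> bounded_above ?g"
  proof (rule unb)
    fix B
    obtain T where T: "T \<in> CC" "B < h_d 2 T" using F5 by blast
    then show "\<exists>n m. ?g n = Some m \<and> B < m" using Uf_ge[OF fin T(1), of "h_i T"] by force
  qed
  ultimately show ?thesis unfolding typ_u_def by (simp add: typ_beta)
qed

lemma e_dd: "typ_u 2 CC Kd Kd = TGamma"
proof -
  let ?g = "Ufun CC (h_d 2) (h_d 2)"
  have fin: "finite {h_d 2 T | T. T \<in> CC \<and> h_d 2 T \<le> n}" for n by (rule Uf_fin[where B=n]) auto
  have unb': "\<exists>n m. ?g n = Some m \<and> B < n \<and> n \<le> m" for B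
  proof -
    obtain T where T: "T \<in> CC" "B < h_d 2 T" using F5 by blast
    then show ?thesis using Uf_ge[OF fin T(1), of "h_d 2 T"] by force
  qed
  have "\<not> bounded_above ?g"
    by (rule unb) (use unb' in \<open>meson less_le_trans\<close>)
  moreover have "infinite (Dom_plus ?g)"
  proof (rule inf_unb)
    fix B
    obtain n m where "?g n = Some m" "B < n" "n \<le> m" using unb' by blast
    then show "\<exists>n\<in>Dom_plus ?g. B < n" by (auto simp: Dom_plus_def)
  qed
  moreover have "infinite (Dom_minus ?g)"
  proof (rule inf_unb)
    fix B
    obtain T where T: "T \<in> CC" "h_d 2 T = 0" using F0[of 1] by auto
    obtain m where m: "?g (Suc B) = Some m" using Uf_ge[OF fin T(1), of "Suc B"] T by force
    then have "m \<le> Suc B" using Uf_Some_in[OF m] by auto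
    then show "\<exists>n\<in>Dom_minus ?g. B < n" using m by (auto simp: Dom_minus_def)
  qed
  ultimately show ?thesis unfolding typ_u_def by (simp add: typ_gamma)
qed

lemma e_da: "typ_u 2 CC Kd Ka = TEps"
proof -
  let ?g = "Ufun CC (h_d 2) (h_a 2)"
  have "?g n = None" if "2 \<le> n" for n
  proof (rule Uf_None, rule inf_unb)
    fix B
    obtain T where T: "T \<in> CC" "B < h_d 2 T" using F5 by blast
    then show "\<exists>x\<in>{h_d 2 T |T. T \<in> CC \<and> h_a 2 T \<le> n}. B < x" using Fa[OF T(1)] that by force
  qed
  have "Dom ?g \<subseteq> {..1}"
  proof
    fix n assume "n \<in> Dom ?g"
    then have "?g n \<noteq> None" by (simp add: Dom_def)
    with \<open>\<And>n. 2 \<le> n \<Longrightarrow> ?g n = None\<close> show "n \<in> {..1}" by (cases "2 \<le> n") auto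
  qed
  then have "finite (Dom ?g)" using finite_subset by blast
  then show ?thesis unfolding typ_u_def by (simp add: typ_eps)
qed

lemma e_a: "typ_u 2 CC Ka c = TAlpha"
proof -
  let ?g = "Ufun CC (h_a 2) (hmeas 2 c)"
  have fin: "finite {h_a 2 T | T. T \<in> CC \<and> hmeas 2 c T \<le> n}" for n by (rule Uf_fin[where B=2]) (use Fa in force)
  have "bounded_above ?g" unfolding bounded_above_def
    by (rule exI[of _ 2]) (use Uf_Some_in Fa in force)
  moreover have "infinite (Dom ?g)"
  proof (rule inf_unb)
    fix B
    obtain T where T: "T \<in> CC" "h_i T = 1" "h_d 2 T = 0" using F0[of 1] by auto
    have "hmeas 2 c T \<le> Suc B" using T Fa[OF T(1)] by (cases c) auto
    then show "\<exists>n\<in>Dom ?g. B < n" using Uf_ge[OF fin T(1), of "Suc B"] by (force simp: Dom_def)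
  qed
  ultimately show ?thesis unfolding typ_u_def by (simp add: typ_alpha)
qed

theorem lemma11:
  shows "typ_u 2 (Tab 2 (UNIV :: nat set) F3) = t3"
proof (intro ext)
  fix b c
  show "typ_u 2 (Tab 2 (UNIV :: nat set) F3) b c = t3 b c"
    by (cases b; cases c) (simp_all add: t3_def e_ii e_id e_di e_dd e_da e_a)
qed


end
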